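(* Let $A$ be a metrizable abelian topological group and $D\le A$ a dense subgroup. Then the restriction map $\hat A\to\hat D$, $\chi\mapsto\chi|_D$, is an isomorphism of topological groups.
   Context: $\mathbb{T}=\mathbb{R}/\mathbb{Z}$. For an abelian topological group $B$, $\hat B$ is the group of continuous homomorphisms $B\to\mathbb{T}$ with the compact-open topology. *)

theory Defs
  imports "HOL-Analysis.Analysis" "HOL-Algebra.Algebra"
begin

text \<open>The circle group T = R/Z, realised (as a topological group) as the unit circle
  in the complex plane under multiplication, via t mod 1 maps to exp(2 pi i t).\<close>
abbreviation circle_top :: "complex topology" where
  "circle_top \<equiv> top_of_set (sphere 0 1)"

definition topological_comm_group :: "'a topology \<Rightarrow> ('a, 'b) monoid_scheme \<Rightarrow> bool" where
  "topological_comm_group S G \<longleftrightarrow>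
     comm_group G \<and> topspace S = carrier G \<and>
     continuous_map (prod_topology S S) S (\<lambda>(x, y). mult G x y) \<and>
     continuous_map S S (\<lambda>x. m_inv G x)"

definition characters :: "'a topology \<Rightarrow> ('a, 'b) monoid_scheme \<Rightarrow> ('a \<Rightarrow> complex) set" where
  "characters S G = {\<phi>. continuous_map S circle_top \<phi> \<and>
      (\<forall>x\<in>carrier G. \<forall>y\<in>carrier G. \<phi> (mult G x y) = \<phi> x * \<phi> y) \<and>
      (\<forall>x. x \<notin> topspace S \<longrightarrow> \<phi> x = 1)}"

definition compact_open :: "'a topology \<Rightarrow> 'c topology \<Rightarrow> ('a \<Rightarrow> 'c) set \<Rightarrow> ('a \<Rightarrow> 'c) topology" where
  "compact_open S Y F = topology_generated_by
     {{f \<in> F. f ` K \<subseteq> U} | K U. compactin S K \<and> openin Y U}"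

text \<open>The dual group as a topological space (its group law is pointwise multiplication).\<close>
definition dual_top :: "'a topology \<Rightarrow> ('a, 'b) monoid_scheme \<Rightarrow> ('a \<Rightarrow> complex) topology" where
  "dual_top S G = compact_open S circle_top (characters S G)"

definition restrict_char :: "'a set \<Rightarrow> ('a \<Rightarrow> complex) \<Rightarrow> ('a \<Rightarrow> complex)" where
  "restrict_char D \<phi> = (\<lambda>x. if x \<in> D then \<phi> x else 1)"

end

theory Submission
  imports Defs
begin



lemma small_eq:
  fixes u v :: complex
  assumes "\<And>e. e > 0 \<Longrightarrow> cmod (u - v) < e"
  shows "u = v"
proof (rule ccontr)
  assume "u \<noteq> v"
  then have "cmod (u - v) > 0" by simp
  from assms[OF this] show False by simp
qed

lemma unit_mult_dist:
  fixes z w :: complex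
  assumes "cmod w = 1"
  shows "cmod (z * w - 1) \<le> cmod (z - 1) + cmod (w - 1)"
proof -
  have "z * w - 1 = (z - 1) * w + (w - 1)" by (simp add: algebra_simps)
  then have "cmod (z * w - 1) \<le> cmod ((z - 1) * w) + cmod (w - 1)"
    by (metis norm_triangle_ineq)
  also have "cmod ((z - 1) * w) = cmod (z - 1)" using assms by (simp add: norm_mult)
  finally show ?thesis .
qed

lemma unit_cnj_dist:
  fixes z w :: complex
  assumes "cmod w = 1"
  shows "cmod (z * cnj w - 1) = cmod (z - w)"
proof -
  have "w * cnj w = 1" using assms by (simp add: complex_mult_cnj cmod_def)
  then have "z * cnj w - 1 = (z - w) * cnj w" by (simp add: algebra_simps)
  then show ?thesis using assms by (simp add: norm_mult)
qed

lemma cis_minus_one_le: "cmod (cis t - 1) \<le> \<bar>t\<bar>"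
proof -
  have "(cmod (cis t - 1))^2 = (cos t - 1)^2 + (sin t)^2"
    by (simp add: cmod_power2)
  also have "\<dots> = 2 - 2 * cos t"
    using sin_cos_squared_add[of t] by (simp add: power2_eq_square algebra_simps)
  also have "cos t = 1 - 2 * (sin (t/2))^2"
    using cos_double_sin[of "t/2"] by simp
  also have "2 - 2 * (1 - 2 * (sin (t/2))^2) = 4 * (sin (t/2))^2" by simp
  also have "\<dots> \<le> 4 * (t/2)^2"
  proof -
    have "(sin (t/2))^2 \<le> (t/2)^2"
      by (metis abs_sin_x_le_abs_x abs_ge_zero power_mono power2_abs)
    then show ?thesis by simp
  qed
  also have "\<dots> = \<bar>t\<bar>^2" by (simp add: power2_eq_square)
  finally show ?thesis by (rule power2_le_imp_le) simp
qed

lemma cos_nonpos_range: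
  assumes "pi/2 \<le> x" "x \<le> 3*pi/2"
  shows "cos x \<le> 0"
proof -
  have "cos x = - sin (x - pi/2)" by (simp add: sin_diff)
  moreover have "sin (x - pi/2) \<ge> 0" using assms by (intro sin_ge_zero) auto
  ultimately show ?thesis by simp
qed

lemma circle_pow_lemma:
  fixes z :: complex
  assumes z1: "cmod z = 1" and M: "M \<ge> (1::nat)" and pos: "\<forall>m\<in>{1..M}. Re (z ^ m) > 0"
  shows "cmod (z - 1) < 2 / real M"
proof -
  define \<theta> where "\<theta> = Arg z"
  have "z \<noteq> 0" using z1 by auto
  from Arg_correct[OF this] have zc: "sgn z = cis \<theta>" and th: "-pi < \<theta>" "\<theta> \<le> pi"
    by (auto simp: \<theta>_def)
  have zz: "z = cis \<theta>" using zc z1 by (simp add: sgn_div_norm)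
  have Mpos: "real M > 0" using M by simp
  have small: "\<bar>\<theta>\<bar> < pi / (2 * real M)"
  proof (rule ccontr)
    assume "\<not> ?thesis"
    then have big: "pi / (2 * real M) \<le> \<bar>\<theta>\<bar>" by simp
    define t where "t = \<bar>\<theta>\<bar>"
    have "pi / (2 * real M) > 0" using Mpos by simp
    then have tpos: "t > 0" using big unfolding t_def by linarith
    have tle: "t \<le> pi" using th unfolding t_def by auto
    define m where "m = nat \<lceil>pi / (2 * t)\<rceil>"
    have q: "pi / (2 * t) > 0" using tpos by simp
    have c0: "\<lceil>pi / (2 * t)\<rceil> \<ge> 0" using q by (simp add: order_less_imp_le)
    have rm: "real m = of_int \<lceil>pi / (2 * t)\<rceil>" unfolding m_def using c0 by simp
    have m1: "real m \<ge> pi / (2 * t)" unfolding rm by (rule le_of_int_ceiling)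
    have m2: "real m < pi / (2 * t) + 1" unfolding rm using ceiling_correct[of "pi / (2 * t)"] by linarith
    have "pi / (2 * t) \<le> real M"
      using big Mpos tpos unfolding t_def by (simp add: field_simps)
    then have mM: "m \<le> M" unfolding m_def by (simp add: nat_le_iff ceiling_le_iff)
    have "real m > 0" using m1 q by linarith
    then have m0: "m \<ge> 1" by simp
    have a1: "real m * t \<ge> pi / 2" using m1 tpos by (simp add: field_simps)
    have a2: "real m * t < pi / 2 + t" using m2 tpos by (simp add: field_simps)
    have "cos (real m * t) \<le> 0" using a1 a2 tle by (intro cos_nonpos_range) auto
    moreover have "Re (z ^ m) = cos (real m * t)"
    proof -
      have "Re (z ^ m) = cos (real m * \<theta>)" unfolding zz Complex.DeMoivre by simp
      also have "\<dots> = cos (real m * t)"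
      proof (cases "\<theta> \<ge> 0")
        case True then show ?thesis by (simp add: t_def)
      next
        case False
        then have "real m * \<theta> = - (real m * t)" by (simp add: t_def)
        then show ?thesis by simp
      qed
      finally show ?thesis .
    qed
    moreover have "Re (z ^ m) > 0" using pos m0 mM by auto
    ultimately show False by simp
  qed
  have "cmod (z - 1) \<le> \<bar>\<theta>\<bar>" unfolding zz by (rule cis_minus_one_le)
  also have "\<dots> < pi / (2 * real M)" by (rule small)
  also have "\<dots> < 2 / real M" using Mpos pi_less_4 by (simp add: field_simps)
  finally show ?thesis .
qed

locale dctx =
  fixes S :: "'a topology" and G :: "('a, 'b) monoid_scheme" and D :: "'a set"
  assumes tcg: "topological_comm_group S G"
    and sgD: "subgroup D G"
    and denseD: "S closure_of D = topspace S"
begin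

lemma cg: "comm_group G" using tcg by (simp add: topological_comm_group_def)
lemma ts: "topspace S = carrier G" using tcg by (simp add: topological_comm_group_def)
lemma cmult: "continuous_map (prod_topology S S) S (\<lambda>(x, y). x \<otimes>\<^bsub>G\<^esub> y)"
  using tcg by (simp add: topological_comm_group_def)
lemma cinv: "continuous_map S S (\<lambda>x. inv\<^bsub>G\<^esub> x)"
  using tcg by (simp add: topological_comm_group_def)

sublocale comm_group G by (rule cg)

lemma D_sub: "D \<subseteq> carrier G" using sgD by (simp add: subgroup_def)
lemma D_one: "\<one>\<^bsub>G\<^esub> \<in> D" using sgD by (simp add: subgroup_def)
lemma D_mult: "a \<in> D \<Longrightarrow> b \<in> D \<Longrightarrow> a \<otimes>\<^bsub>G\<^esub> b \<in> D" using sgD by (simp add: subgroup_def)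
lemma D_inv: "a \<in> D \<Longrightarrow> inv\<^bsub>G\<^esub> a \<in> D" using sgD by (simp add: subgroup_def)

lemma cont_mult:
  assumes "continuous_map T S f" "continuous_map T S g"
  shows "continuous_map T S (\<lambda>x. f x \<otimes>\<^bsub>G\<^esub> g x)"
proof -
  have "continuous_map T (prod_topology S S) (\<lambda>x. (f x, g x))"
    using assms by (simp add: continuous_map_paired)
  from continuous_map_compose[OF this cmult] show ?thesis by (simp add: o_def)
qed

lemma cont_inv:
  assumes "continuous_map T S f"
  shows "continuous_map T S (\<lambda>x. inv\<^bsub>G\<^esub> (f x))"
  using continuous_map_compose[OF assms cinv] by (simp add: o_def)

lemma cont_pow: "continuous_map S S (\<lambda>x. x [^]\<^bsub>G\<^esub> (n::nat))"
proof (induction n)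
  case 0
  then show ?case using ts by simp
next
  case (Suc n)
  have "continuous_map S S (\<lambda>x. x [^]\<^bsub>G\<^esub> n \<otimes>\<^bsub>G\<^esub> x)"
    by (rule cont_mult[OF Suc continuous_map_id[unfolded id_def]])
  then show ?case by simp
qed

lemma dense_meet:
  assumes "openin S V" "x \<in> V"
  shows "\<exists>a\<in>V. a \<in> D"
proof -
  have "x \<in> S closure_of D" using denseD openin_subset[OF assms(1)] assms(2) by auto
  then show ?thesis using assms unfolding in_closure_of by blast
qed

lemma nbhd_div:
  assumes "openin S W" "\<one>\<^bsub>G\<^esub> \<in> W" "z \<in> topspace S"
  obtains V where "openin S V" "z \<in> V" "\<And>a b. a \<in> V \<Longrightarrow> b \<in> V \<Longrightarrow> a \<otimes>\<^bsub>G\<^esub> inv\<^bsub>G\<^esub> b \<in> W"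
proof -
  define h where "h = (\<lambda>p. fst p \<otimes>\<^bsub>G\<^esub> inv\<^bsub>G\<^esub> (snd p))"
  have c: "continuous_map (prod_topology S S) S h"
    unfolding h_def by (intro cont_mult cont_inv continuous_map_fst continuous_map_snd)
  define Ob where "Ob = {p \<in> topspace (prod_topology S S). h p \<in> W}"
  have o: "openin (prod_topology S S) Ob"
    unfolding Ob_def by (rule openin_continuous_map_preimage[OF c assms(1)])
  have zz: "(z, z) \<in> Ob"
    using assms ts unfolding Ob_def h_def by simp
  obtain U1 U2 where U: "openin S U1" "openin S U2" "z \<in> U1" "z \<in> U2" "U1 \<times> U2 \<subseteq> Ob"
    using o zz unfolding openin_prod_topology_alt by meson
  show ?thesis
  proof (rule that[of "U1 \<inter> U2"])
    show "openin S (U1 \<inter> U2)" using U by auto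
    show "z \<in> U1 \<inter> U2" using U by auto
    fix a b assume "a \<in> U1 \<inter> U2" "b \<in> U1 \<inter> U2"
    then have "(a, b) \<in> Ob" using U by auto
    then show "a \<otimes>\<^bsub>G\<^esub> inv\<^bsub>G\<^esub> b \<in> W" unfolding Ob_def h_def by simp
  qed
qed

lemma nbhd_mult:
  assumes "openin S W" "x \<otimes>\<^bsub>G\<^esub> y \<in> W" "x \<in> topspace S" "y \<in> topspace S"
  obtains V1 V2 where "openin S V1" "openin S V2" "x \<in> V1" "y \<in> V2"
    "\<And>a b. a \<in> V1 \<Longrightarrow> b \<in> V2 \<Longrightarrow> a \<otimes>\<^bsub>G\<^esub> b \<in> W"
proof -
  define h where "h = (\<lambda>p. fst p \<otimes>\<^bsub>G\<^esub> snd p)"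
  have c: "continuous_map (prod_topology S S) S h"
    unfolding h_def by (intro cont_mult continuous_map_fst continuous_map_snd)
  define Ob where "Ob = {p \<in> topspace (prod_topology S S). h p \<in> W}"
  have o: "openin (prod_topology S S) Ob"
    unfolding Ob_def by (rule openin_continuous_map_preimage[OF c assms(1)])
  have xy: "(x, y) \<in> Ob"
    using assms unfolding Ob_def h_def by simp
  obtain U1 U2 where U: "openin S U1" "openin S U2" "x \<in> U1" "y \<in> U2" "U1 \<times> U2 \<subseteq> Ob"
    using o xy unfolding openin_prod_topology_alt by meson
  show ?thesis
  proof (rule that[of U1 U2])
    fix a b assume "a \<in> U1" "b \<in> U2"
    then have "(a, b) \<in> Ob" using U by auto
    then show "a \<otimes>\<^bsub>G\<^esub> b \<in> W" unfolding Ob_def h_def by simp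
  qed (use U in auto)
qed


lemma pow_nbhd:
  fixes M :: nat
  assumes "openin S B" "\<one>\<^bsub>G\<^esub> \<in> B"
  shows "\<exists>W. openin S W \<and> \<one>\<^bsub>G\<^esub> \<in> W \<and> (\<forall>v\<in>W. \<forall>m\<in>{1..M}. v [^]\<^bsub>G\<^esub> m \<in> B)"
proof (induction M)
  case 0
  have "openin S (topspace S)" by simp
  moreover have "\<one>\<^bsub>G\<^esub> \<in> topspace S" using ts by simp
  ultimately show ?case by auto
next
  case (Suc M)
  then obtain W where W: "openin S W" "\<one>\<^bsub>G\<^esub> \<in> W" "\<forall>v\<in>W. \<forall>m\<in>{1..M}. v [^]\<^bsub>G\<^esub> m \<in> B"
    by blast
  define W2 where "W2 = W \<inter> {v \<in> topspace S. v [^]\<^bsub>G\<^esub> (Suc M) \<in> B}"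
  have "openin S W2" unfolding W2_def
    using W(1) openin_continuous_map_preimage[OF cont_pow assms(1)] by blast
  moreover have "\<one>\<^bsub>G\<^esub> \<in> W2" unfolding W2_def using W(2) assms(2) ts by simp
  moreover have "\<forall>v\<in>W2. \<forall>m\<in>{1..Suc M}. v [^]\<^bsub>G\<^esub> m \<in> B"
  proof (intro ballI)
    fix v m assume v: "v \<in> W2" and m: "m \<in> {1..Suc M}"
    show "v [^]\<^bsub>G\<^esub> m \<in> B"
    proof (cases "m = Suc M")
      case True then show ?thesis using v unfolding W2_def by simp
    next
      case False then have "m \<in> {1..M}" using m by auto
      then show ?thesis using v W(3) unfolding W2_def by blast
    qed
  qed
  ultimately show ?case by blast
qed

lemma finite_net:
  assumes K: "compactin S K" and V: "openin S V" "\<one>\<^bsub>G\<^esub> \<in> V"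
  shows "\<exists>F. finite F \<and> F \<subseteq> D \<and> (\<forall>x\<in>K. \<exists>a\<in>F. inv\<^bsub>G\<^esub> a \<otimes>\<^bsub>G\<^esub> x \<in> V)"
proof -
  define Ob where "Ob = (\<lambda>a. {x \<in> topspace S. inv\<^bsub>G\<^esub> a \<otimes>\<^bsub>G\<^esub> x \<in> V})"
  have opn: "openin S (Ob a)" if "a \<in> D" for a
  proof -
    have "inv\<^bsub>G\<^esub> a \<in> topspace S" using that D_sub ts by auto
    then have "continuous_map S S (\<lambda>x. inv\<^bsub>G\<^esub> a \<otimes>\<^bsub>G\<^esub> x)"
      by (intro cont_mult continuous_map_id[unfolded id_def]) simp
    then show ?thesis unfolding Ob_def by (rule openin_continuous_map_preimage[OF _ V(1)])
  qed
  have cov: "K \<subseteq> \<Union>(Ob ` D)"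
  proof
    fix x assume x: "x \<in> K"
    then have xt: "x \<in> topspace S" using K compactin_subset_topspace by blast
    have "continuous_map S S (\<lambda>b. inv\<^bsub>G\<^esub> b \<otimes>\<^bsub>G\<^esub> x)"
      using xt by (intro cont_mult cont_inv continuous_map_id[unfolded id_def]) simp
    then have "openin S {b \<in> topspace S. inv\<^bsub>G\<^esub> b \<otimes>\<^bsub>G\<^esub> x \<in> V}"
      by (rule openin_continuous_map_preimage[OF _ V(1)])
    moreover have "x \<in> {b \<in> topspace S. inv\<^bsub>G\<^esub> b \<otimes>\<^bsub>G\<^esub> x \<in> V}"
      using xt V(2) ts by simp
    ultimately obtain b where "b \<in> {b \<in> topspace S. inv\<^bsub>G\<^esub> b \<otimes>\<^bsub>G\<^esub> x \<in> V}" "b \<in> D"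
      using dense_meet by blast
    then show "x \<in> \<Union>(Ob ` D)" using xt unfolding Ob_def by auto
  qed
  obtain \<F> where F: "finite \<F>" "\<F> \<subseteq> Ob ` D" "K \<subseteq> \<Union>\<F>"
    using K cov opn unfolding compactin_def by (metis (no_types, lifting) imageE)
  then obtain C where C: "C \<subseteq> D" "finite C" "\<F> = Ob ` C"
    by (meson finite_subset_image)
  show ?thesis
  proof (intro exI conjI)
    show "finite C" "C \<subseteq> D" by (fact C)+
    show "\<forall>x\<in>K. \<exists>a\<in>C. inv\<^bsub>G\<^esub> a \<otimes>\<^bsub>G\<^esub> x \<in> V"
      using F(3) C(3) unfolding Ob_def by blast
  qed
qed

lemma null_compact:
  fixes P B :: "nat \<Rightarrow> 'a set"
  assumes fin: "\<And>k. finite (P k)" and PB: "\<And>k. P k \<subseteq> B k" and Bt: "\<And>k. B k \<subseteq> topspace S"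
    and et: "e \<in> topspace S"
    and base: "\<And>U. openin S U \<Longrightarrow> e \<in> U \<Longrightarrow> \<exists>N. \<forall>k\<ge>N. B k \<subseteq> U"
  shows "compactin S (insert e (\<Union>k. P k))"
  unfolding compactin_def
proof (intro conjI allI impI)
  show "insert e (\<Union>k. P k) \<subseteq> topspace S" using PB Bt et by blast
  fix \<U> assume U: "(\<forall>x\<in>\<U>. openin S x) \<and> insert e (\<Union>k. P k) \<subseteq> \<Union>\<U>"
  then obtain U0 where U0: "U0 \<in> \<U>" "e \<in> U0" by auto
  then obtain N where N: "\<forall>k\<ge>N. B k \<subseteq> U0" using base U by blast
  define Q where "Q = (\<Union>k<N. P k)"
  have fQ: "finite Q" unfolding Q_def using fin by (intro finite_UN_I) auto
  have "\<forall>q\<in>Q. \<exists>U\<in>\<U>. q \<in> U" using U unfolding Q_def by blast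
  then obtain f where f: "\<forall>q\<in>Q. f q \<in> \<U> \<and> q \<in> f q" by metis
  show "\<exists>\<F>. finite \<F> \<and> \<F> \<subseteq> \<U> \<and> insert e (\<Union>k. P k) \<subseteq> \<Union>\<F>"
  proof (intro exI conjI)
    show "finite (insert U0 (f ` Q))" using fQ by simp
    show "insert U0 (f ` Q) \<subseteq> \<U>" using U0 f by auto
    show "insert e (\<Union>k. P k) \<subseteq> \<Union>(insert U0 (f ` Q))"
    proof
      fix y assume "y \<in> insert e (\<Union>k. P k)"
      then consider "y = e" | k where "y \<in> P k" by blast
      then show "y \<in> \<Union>(insert U0 (f ` Q))"
      proof cases
        case 1 then show ?thesis using U0 by auto
      next
        case (2 k)
        show ?thesis
        proof (cases "k < N")
          case True
          then have "y \<in> Q" using 2 unfolding Q_def by auto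
          then show ?thesis using f by auto
        next
          case False
          then have "B k \<subseteq> U0" using N by simp
          then have "y \<in> U0" using 2 PB[of k] by blast
          then show ?thesis by auto
        qed
      qed
    qed
  qed
qed

lemma dec_base:
  assumes fc: "first_countable S"
  obtains B :: "nat \<Rightarrow> 'a set" where "\<And>n. openin S (B n)" "\<And>n. \<one>\<^bsub>G\<^esub> \<in> B n"
    "\<And>U. openin S U \<Longrightarrow> \<one>\<^bsub>G\<^esub> \<in> U \<Longrightarrow> \<exists>N. \<forall>k\<ge>N. B k \<subseteq> U"
proof -
  have et: "\<one>\<^bsub>G\<^esub> \<in> topspace S" using ts by simp
  obtain \<B> where B: "countable \<B>" "\<forall>V\<in>\<B>. openin S V"
    "\<forall>U. openin S U \<and> \<one>\<^bsub>G\<^esub> \<in> U \<longrightarrow> (\<exists>V\<in>\<B>. \<one>\<^bsub>G\<^esub> \<in> V \<and> V \<subseteq> U)"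
    using fc et unfolding first_countable_def by metis
  define \<B>' where "\<B>' = {V \<in> \<B>. \<one>\<^bsub>G\<^esub> \<in> V}"
  have c': "countable \<B>'" unfolding \<B>'_def using B(1) by simp
  have ne: "\<B>' \<noteq> {}" using B(3) et unfolding \<B>'_def by fastforce
  define C where "C = from_nat_into \<B>'"
  have rC: "range C = \<B>'" unfolding C_def using range_from_nat_into[OF ne c'] .
  define Bn where "Bn = (\<lambda>n. \<Inter>(C ` {..n}))"
  show ?thesis
  proof (rule that[of Bn])
    fix n
    have "\<forall>j. C j \<in> \<B>'" using rC by auto
    then have Cj: "\<And>j. openin S (C j) \<and> \<one>\<^bsub>G\<^esub> \<in> C j" using B(2) unfolding \<B>'_def by auto
    show "openin S (Bn n)" unfolding Bn_def using Cj by (intro openin_Inter) auto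
    show "\<one>\<^bsub>G\<^esub> \<in> Bn n" unfolding Bn_def using Cj by auto
  next
    fix U assume "openin S U" "\<one>\<^bsub>G\<^esub> \<in> U"
    then obtain V where "V \<in> \<B>'" "V \<subseteq> U" using B(3) unfolding \<B>'_def by blast
    then obtain N where "C N = V" using rC by (metis imageE)
    then have "\<forall>k\<ge>N. Bn k \<subseteq> U" unfolding Bn_def using \<open>V \<subseteq> U\<close> by auto
    then show "\<exists>N. \<forall>k\<ge>N. Bn k \<subseteq> U" by blast
  qed
qed


lemma D_pow: "l \<in> D \<Longrightarrow> l [^]\<^bsub>G\<^esub> (m::nat) \<in> D"
  by (induction m) (auto simp: D_one D_mult)

lemma grp_id1:
  assumes "a \<in> carrier G" "b \<in> carrier G" "x \<in> carrier G"
  shows "(inv\<^bsub>G\<^esub> b \<otimes>\<^bsub>G\<^esub> x) \<otimes>\<^bsub>G\<^esub> inv\<^bsub>G\<^esub> (inv\<^bsub>G\<^esub> a \<otimes>\<^bsub>G\<^esub> x) = a \<otimes>\<^bsub>G\<^esub> inv\<^bsub>G\<^esub> b"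
proof -
  have "inv\<^bsub>G\<^esub> (inv\<^bsub>G\<^esub> a \<otimes>\<^bsub>G\<^esub> x) = inv\<^bsub>G\<^esub> x \<otimes>\<^bsub>G\<^esub> a"
    using assms by (simp add: inv_mult_group)
  moreover have "x \<otimes>\<^bsub>G\<^esub> (inv\<^bsub>G\<^esub> x \<otimes>\<^bsub>G\<^esub> a) = a"
    using assms by (simp add: m_assoc[symmetric])
  ultimately have "(inv\<^bsub>G\<^esub> b \<otimes>\<^bsub>G\<^esub> x) \<otimes>\<^bsub>G\<^esub> inv\<^bsub>G\<^esub> (inv\<^bsub>G\<^esub> a \<otimes>\<^bsub>G\<^esub> x)
      = inv\<^bsub>G\<^esub> b \<otimes>\<^bsub>G\<^esub> a"
    using assms by (simp add: m_assoc)
  also have "\<dots> = a \<otimes>\<^bsub>G\<^esub> inv\<^bsub>G\<^esub> b" using assms by (simp add: m_comm)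
  finally show ?thesis .
qed

lemma grp_id2:
  assumes "a \<in> carrier G" "b \<in> carrier G"
  shows "(a \<otimes>\<^bsub>G\<^esub> inv\<^bsub>G\<^esub> b) \<otimes>\<^bsub>G\<^esub> b = a"
  using assms by (simp add: m_assoc)

lemma grp_id3:
  assumes "a \<in> carrier G" "x \<in> carrier G"
  shows "a \<otimes>\<^bsub>G\<^esub> (inv\<^bsub>G\<^esub> a \<otimes>\<^bsub>G\<^esub> x) = x"
  using assms by (simp add: m_assoc[symmetric])

lemma char_unit:
  assumes "continuous_map T circle_top g" "x \<in> topspace T"
  shows "cmod (g x) = 1"
proof -
  have "g x \<in> topspace circle_top"
    using continuous_map_image_subset_topspace[OF assms(1)] assms(2) by blast
  then show ?thesis by simp
qed

end



lemma char_unit0: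
  assumes "continuous_map Z circle_top g" "x \<in> topspace Z"
  shows "cmod (g x) = 1"
proof -
  have "g x \<in> topspace circle_top"
    using continuous_map_image_subset_topspace[OF assms(1)] assms(2) by blast
  then show ?thesis by simp
qed

lemma tri3:
  fixes u v w :: complex
  shows "cmod (u - v) \<le> cmod (w - u) + cmod (w - v)"
proof -
  have "u - v = (w - v) - (w - u)" by simp
  then have "cmod (u - v) \<le> cmod (w - v) + cmod (w - u)"
    using norm_triangle_ineq4[of "w - v" "w - u"] by simp
  then show ?thesis by simp
qed


lemma cmap_mult_cnj:
  fixes f g :: "'x \<Rightarrow> complex"
  assumes "continuous_map Z euclidean f" "continuous_map Z euclidean g"
  shows "continuous_map Z euclidean (\<lambda>x. f x * cnj (g x))"
  using assms by (auto simp: continuous_map_atin intro!: tendsto_mult tendsto_cnj)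

lemma topspace_co: "topspace (compact_open Xt Y F) = F"
proof -
  have "compactin Xt {}" "openin Y {}" by auto
  then have "{f \<in> F. f ` {} \<subseteq> {}} \<in> {{f \<in> F. f ` K \<subseteq> U} | K U. compactin Xt K \<and> openin Y U}"
    by blast
  moreover have "{f \<in> F. f ` {} \<subseteq> {}} = F" by simp
  ultimately have "F \<subseteq> \<Union>{{f \<in> F. f ` K \<subseteq> U} | K U. compactin Xt K \<and> openin Y U}" by blast
  moreover have "\<Union>{{f \<in> F. f ` K \<subseteq> U} | K U. compactin Xt K \<and> openin Y U} \<subseteq> F" by blast
  ultimately show ?thesis unfolding compact_open_def topology_generated_by_topspace by blast
qed

lemma co_basic:
  assumes "compactin Xt K" "openin Y U"
  shows "openin (compact_open Xt Y F) {f \<in> F. f ` K \<subseteq> U}"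
  unfolding compact_open_def by (rule topology_generated_by_Basis) (use assms in blast)

lemma co_unif:
  assumes gF: "g \<in> F" and gc: "continuous_map Xt circle_top g" and L: "compactin Xt L" and d: "\<delta> > 0"
  shows "\<exists>N. openin (compact_open Xt circle_top F) N \<and> g \<in> N \<and> (\<forall>f\<in>N. \<forall>l\<in>L. cmod (f l - g l) < \<delta>)"
proof -
  define V where "V = (\<lambda>t. {y \<in> topspace Xt. g y \<in> sphere 0 1 \<inter> ball (g t) (\<delta>/4)})"
  define C where "C = (\<lambda>t. {y \<in> topspace Xt. g y \<in> sphere 0 1 \<inter> cball (g t) (\<delta>/4)})"
  have Vo: "openin Xt (V t)" for t unfolding V_def
    by (rule openin_continuous_map_preimage[OF gc]) (intro openin_open_Int open_ball)
  have Cc: "closedin Xt (C t)" for t unfolding C_def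
    by (rule closedin_continuous_map_preimage[OF gc]) (intro closedin_closed_Int closed_cball)
  have VC: "V t \<subseteq> C t" for t unfolding V_def C_def by auto
  have Lt: "L \<subseteq> topspace Xt" using L compactin_subset_topspace by blast
  have gs: "g y \<in> sphere 0 1" if "y \<in> topspace Xt" for y
    using char_unit0[OF gc that] by simp
  have cov: "L \<subseteq> \<Union>(V ` L)"
  proof
    fix l assume "l \<in> L"
    then have "l \<in> V l" unfolding V_def using Lt gs d by auto
    then show "l \<in> \<Union>(V ` L)" using \<open>l \<in> L\<close> by blast
  qed
  obtain \<F> where F: "finite \<F>" "\<F> \<subseteq> V ` L" "L \<subseteq> \<Union>\<F>"
    using L cov Vo unfolding compactin_def by (metis (no_types, lifting) imageE)
  then obtain T where T: "T \<subseteq> L" "finite T" "\<F> = V ` T"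
    by (meson finite_subset_image)
  define K where "K = (\<lambda>t. C t \<inter> L)"
  have Kc: "compactin Xt (K t)" for t unfolding K_def by (rule closed_Int_compactin[OF Cc L])
  define U where "U = (\<lambda>t. sphere (0::complex) 1 \<inter> ball (g t) (\<delta>/2))"
  have Uo: "openin circle_top (U t)" for t unfolding U_def by (intro openin_open_Int open_ball)
  define N where "N = (\<Inter>t\<in>T. {f \<in> F. f ` K t \<subseteq> U t}) \<inter> F"
  have No: "openin (compact_open Xt circle_top F) N"
  proof -
    have "openin (compact_open Xt circle_top F) ((\<Inter>t\<in>T. {f \<in> F. f ` K t \<subseteq> U t}) \<inter> topspace (compact_open Xt circle_top F))"
      using T(2) co_basic[OF Kc Uo] by (intro openin_INT) auto
    then show ?thesis unfolding N_def topspace_co .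
  qed
  have gN: "g \<in> N"
  proof -
    have "g ` K t \<subseteq> U t" for t
    proof
      fix z assume "z \<in> g ` K t"
      then obtain y where y: "y \<in> K t" "z = g y" by blast
      then have "g y \<in> sphere 0 1 \<inter> cball (g t) (\<delta>/4)" unfolding K_def C_def by auto
      then show "z \<in> U t" unfolding U_def using y d by auto
    qed
    then show ?thesis unfolding N_def using gF by auto
  qed
  have "\<forall>f\<in>N. \<forall>l\<in>L. cmod (f l - g l) < \<delta>"
  proof (intro ballI)
    fix f l assume f: "f \<in> N" and l: "l \<in> L"
    then obtain t where t: "t \<in> T" "l \<in> V t" using F(3) T(3) by blast
    then have "l \<in> K t" unfolding K_def using VC l by auto
    then have "f l \<in> U t" using f t(1) unfolding N_def by blast
    then have 1: "dist (g t) (f l) < \<delta>/2" unfolding U_def by simp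
    have 2: "dist (g t) (g l) < \<delta>/4" using t(2) unfolding V_def by simp
    have "dist (f l) (g l) \<le> dist (g t) (f l) + dist (g t) (g l)" by (rule dist_triangle3)
    then have "dist (f l) (g l) < \<delta>" using 1 2 d by linarith
    then show "cmod (f l - g l) < \<delta>" by (simp add: dist_norm)
  qed
  then show ?thesis using No gN by blast
qed

context dctx begin
lemma core:
  assumes fc: "first_countable S" and K: "compactin S K" and ep: "\<epsilon> > 0"
  shows "\<exists>L \<delta>. compactin S L \<and> L \<subseteq> D \<and> \<delta> > 0 \<and>
    (\<forall>g. continuous_map S circle_top g \<and>
         (\<forall>x\<in>carrier G. \<forall>y\<in>carrier G. g (x \<otimes>\<^bsub>G\<^esub> y) = g x * g y) \<and>
         (\<forall>l\<in>L. cmod (g l - 1) < \<delta>) \<longrightarrow> (\<forall>x\<in>K. cmod (g x - 1) < \<epsilon>))"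
proof -
  obtain B :: "nat \<Rightarrow> 'a set" where Bo: "\<And>n. openin S (B n)" and Be: "\<And>n. \<one>\<^bsub>G\<^esub> \<in> B n"
    and Bbase: "\<And>U. openin S U \<Longrightarrow> \<one>\<^bsub>G\<^esub> \<in> U \<Longrightarrow> \<exists>N. \<forall>k\<ge>N. B k \<subseteq> U"
    using dec_base[OF fc] by metis
  define M where "M = (\<lambda>k::nat. nat \<lceil>2^(k+4) / \<epsilon>\<rceil>)"
  have Mge: "real (M k) \<ge> 2^(k+4) / \<epsilon>" for k
  proof -
    have "(0::real) < 2^(k+4) / \<epsilon>" using ep by simp
    then have "\<lceil>2^(k+4) / \<epsilon>\<rceil> \<ge> 0" by simp
    then have "real (M k) = of_int \<lceil>2^(k+4) / \<epsilon>\<rceil>" unfolding M_def by simp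
    then show ?thesis by (simp add: le_of_int_ceiling)
  qed
  have M1: "M k \<ge> 1" for k
  proof -
    have "2^(k+4) / \<epsilon> > 0" using ep by simp
    then have "real (M k) > 0" using Mge[of k] by linarith
    then show ?thesis by simp
  qed
  have Mb: "2 / real (M k) \<le> \<epsilon> / 2^(k+3)" for k
  proof -
    have pos: "real (M k) > 0" using M1[of k] by simp
    have "2^(k+4) \<le> \<epsilon> * real (M k)" using Mge[of k] ep by (simp add: field_simps)
    moreover have "(2::real)^(k+4) = 2 * 2^(k+3)" by (simp add: power_add)
    ultimately have "2 * 2^(k+3) \<le> \<epsilon> * real (M k)" by simp
    then show ?thesis using pos ep by (simp add: field_simps)
  qed
  have "\<forall>k. \<exists>W. openin S W \<and> \<one>\<^bsub>G\<^esub> \<in> W \<and> (\<forall>v\<in>W. \<forall>m\<in>{1..M k}. v [^]\<^bsub>G\<^esub> m \<in> B k)"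
    using pow_nbhd Bo Be by blast
  then obtain W' where W'o: "\<And>k. openin S (W' k)" and W'e: "\<And>k. \<one>\<^bsub>G\<^esub> \<in> W' k"
    and W'p: "\<And>k v m. v \<in> W' k \<Longrightarrow> m \<in> {1..M k} \<Longrightarrow> v [^]\<^bsub>G\<^esub> m \<in> B k"
    by metis
  have et: "\<one>\<^bsub>G\<^esub> \<in> topspace S" using ts by simp
  have "\<forall>k. \<exists>V. openin S V \<and> \<one>\<^bsub>G\<^esub> \<in> V \<and> (\<forall>a\<in>V. \<forall>b\<in>V. a \<otimes>\<^bsub>G\<^esub> inv\<^bsub>G\<^esub> b \<in> W' k)"
  proof
    fix k
    obtain V where "openin S V" "\<one>\<^bsub>G\<^esub> \<in> V" "\<And>a b. a \<in> V \<Longrightarrow> b \<in> V \<Longrightarrow> a \<otimes>\<^bsub>G\<^esub> inv\<^bsub>G\<^esub> b \<in> W' k"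
      using nbhd_div[OF W'o W'e et] by metis
    then show "\<exists>V. openin S V \<and> \<one>\<^bsub>G\<^esub> \<in> V \<and> (\<forall>a\<in>V. \<forall>b\<in>V. a \<otimes>\<^bsub>G\<^esub> inv\<^bsub>G\<^esub> b \<in> W' k)"
      by blast
  qed
  then obtain V' where V'o: "\<And>k. openin S (V' k)" and V'e: "\<And>k. \<one>\<^bsub>G\<^esub> \<in> V' k"
    and V'p: "\<And>k a b. a \<in> V' k \<Longrightarrow> b \<in> V' k \<Longrightarrow> a \<otimes>\<^bsub>G\<^esub> inv\<^bsub>G\<^esub> b \<in> W' k"
    by metis
  define V where "V = (\<lambda>k. \<Inter>j\<in>{..k}. (V' j \<inter> B j))"
  have Vo: "openin S (V k)" for k
    unfolding V_def using V'o Bo by (intro openin_INT2) auto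
  have Ve: "\<one>\<^bsub>G\<^esub> \<in> V k" for k unfolding V_def using V'e Be by auto
  have VB: "V k \<subseteq> B k" for k unfolding V_def by auto
  have Vmono: "k \<le> j \<Longrightarrow> V j \<subseteq> V k" for j k unfolding V_def by auto
  have Vdiv: "a \<in> V k \<Longrightarrow> b \<in> V k \<Longrightarrow> a \<otimes>\<^bsub>G\<^esub> inv\<^bsub>G\<^esub> b \<in> W' k" for a b k
    using V'p unfolding V_def by auto
  have "\<forall>k. \<exists>F. finite F \<and> F \<subseteq> D \<and> (\<forall>x\<in>K. \<exists>a\<in>F. inv\<^bsub>G\<^esub> a \<otimes>\<^bsub>G\<^esub> x \<in> V k)"
    using finite_net[OF K Vo Ve] by blast
  then obtain F where Ff: "\<And>k. finite (F k)" and FD: "\<And>k. F k \<subseteq> D"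
    and Fp: "\<And>k x. x \<in> K \<Longrightarrow> \<exists>a\<in>F k. inv\<^bsub>G\<^esub> a \<otimes>\<^bsub>G\<^esub> x \<in> V k"
    by metis
  define E where "E = (\<lambda>k. {a \<otimes>\<^bsub>G\<^esub> inv\<^bsub>G\<^esub> b | a b. a \<in> F (Suc k) \<and> b \<in> F k \<and> a \<otimes>\<^bsub>G\<^esub> inv\<^bsub>G\<^esub> b \<in> W' k})"
  define P where "P = (\<lambda>k. {l [^]\<^bsub>G\<^esub> m | l m. l \<in> E k \<and> m \<in> {1..M k}})"
  have finE: "finite (E k)" for k
  proof -
    have "E k \<subseteq> (\<lambda>(a, b). a \<otimes>\<^bsub>G\<^esub> inv\<^bsub>G\<^esub> b) ` (F (Suc k) \<times> F k)"
      unfolding E_def by auto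
    moreover have "finite ((\<lambda>(a, b). a \<otimes>\<^bsub>G\<^esub> inv\<^bsub>G\<^esub> b) ` (F (Suc k) \<times> F k))"
      using Ff by simp
    ultimately show ?thesis by (rule finite_subset)
  qed
  have finP: "finite (P k)" for k
  proof -
    have "P k \<subseteq> (\<lambda>(l, m). l [^]\<^bsub>G\<^esub> m) ` (E k \<times> {1..M k})"
      unfolding P_def by auto
    moreover have "finite ((\<lambda>(l, m). l [^]\<^bsub>G\<^esub> m) ` (E k \<times> {1..M k}))"
      using finE by simp
    ultimately show ?thesis by (rule finite_subset)
  qed
  have ED: "E k \<subseteq> D" for k
    unfolding E_def using FD by (auto intro!: D_mult D_inv)
  have PD: "P k \<subseteq> D" for k
    unfolding P_def using ED by (auto intro!: D_pow)
  have EW: "E k \<subseteq> W' k" for k unfolding E_def by auto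
  have PB: "P k \<subseteq> B k" for k
    unfolding P_def using EW W'p by blast
  have Bt: "B k \<subseteq> topspace S" for k using Bo openin_subset by blast
  define L where "L = F 0 \<union> insert \<one>\<^bsub>G\<^esub> (\<Union>k. P k)"
  have LD: "L \<subseteq> D" unfolding L_def using FD PD D_one by blast
  have F0t: "F 0 \<subseteq> topspace S" using FD D_sub ts by blast
  have cL: "compactin S L"
    unfolding L_def
    by (intro compactin_Un finite_imp_compactin F0t Ff null_compact[OF finP PB Bt et Bbase])
  define \<delta> where "\<delta> = min 1 (\<epsilon>/4)"
  have dpos: "\<delta> > 0" unfolding \<delta>_def using ep by simp
  have main: "\<forall>x\<in>K. cmod (g x - 1) < \<epsilon>"
    if gc: "continuous_map S circle_top g"
      and gm: "\<forall>x\<in>carrier G. \<forall>y\<in>carrier G. g (x \<otimes>\<^bsub>G\<^esub> y) = g x * g y"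
      and gL: "\<forall>l\<in>L. cmod (g l - 1) < \<delta>" for g
  proof
    fix x assume xK: "x \<in> K"
    have xt: "x \<in> carrier G" using xK K compactin_subset_topspace ts by blast
    have gu: "cmod (g y) = 1" if "y \<in> carrier G" for y
      using char_unit[OF gc] that ts by simp
    have g1: "g \<one>\<^bsub>G\<^esub> = 1"
    proof -
      have "g \<one>\<^bsub>G\<^esub> = g \<one>\<^bsub>G\<^esub> * g \<one>\<^bsub>G\<^esub>" using gm by (metis one_closed l_one)
      moreover have "g \<one>\<^bsub>G\<^esub> \<noteq> 0" using gu[of "\<one>\<^bsub>G\<^esub>"] by auto
      ultimately show ?thesis by simp
    qed
    have gpow: "g (l [^]\<^bsub>G\<^esub> (m::nat)) = (g l) ^ m" if "l \<in> carrier G" for l m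
    proof (induction m)
      case 0 then show ?case using g1 by simp
    next
      case (Suc m)
      have "g (l [^]\<^bsub>G\<^esub> Suc m) = g (l [^]\<^bsub>G\<^esub> m) * g l"
        using gm that by simp
      then show ?case using Suc by (simp add: mult.commute)
    qed
    define Og where "Og = {y \<in> topspace S. g y \<in> sphere 0 1 \<inter> ball 1 (\<epsilon>/4)}"
    have Ogo: "openin S Og" unfolding Og_def
      by (rule openin_continuous_map_preimage[OF gc]) (intro openin_open_Int open_ball)
    have Oge: "\<one>\<^bsub>G\<^esub> \<in> Og" unfolding Og_def using et g1 ep by simp
    obtain N where BN: "\<forall>k\<ge>N. B k \<subseteq> Og" using Bbase[OF Ogo Oge] by blast
    have "\<forall>k. \<exists>a\<in>F k. inv\<^bsub>G\<^esub> a \<otimes>\<^bsub>G\<^esub> x \<in> V k" using Fp[OF xK] by blast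
    then obtain a where aF: "\<And>k. a k \<in> F k" and aV: "\<And>k. inv\<^bsub>G\<^esub> (a k) \<otimes>\<^bsub>G\<^esub> x \<in> V k"
      by metis
    have ac: "a k \<in> carrier G" for k using aF FD D_sub by blast
    define l where "l = (\<lambda>k. a (Suc k) \<otimes>\<^bsub>G\<^esub> inv\<^bsub>G\<^esub> (a k))"
    have lc: "l k \<in> carrier G" for k unfolding l_def using ac by simp
    have lE: "l k \<in> E k" for k
    proof -
      have u: "inv\<^bsub>G\<^esub> (a k) \<otimes>\<^bsub>G\<^esub> x \<in> V k" by (rule aV)
      have v: "inv\<^bsub>G\<^esub> (a (Suc k)) \<otimes>\<^bsub>G\<^esub> x \<in> V k" using aV[of "Suc k"] Vmono[of k "Suc k"] by auto
      have "(inv\<^bsub>G\<^esub> (a k) \<otimes>\<^bsub>G\<^esub> x) \<otimes>\<^bsub>G\<^esub> inv\<^bsub>G\<^esub> (inv\<^bsub>G\<^esub> (a (Suc k)) \<otimes>\<^bsub>G\<^esub> x) \<in> W' k"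
        by (rule Vdiv[OF u v])
      then have "l k \<in> W' k" unfolding l_def using grp_id1[OF ac ac xt] by simp
      then show ?thesis unfolding E_def l_def using aF by blast
    qed
    have lsmall: "cmod (g (l k) - 1) \<le> \<epsilon> / 2^(k+3)" for k
    proof -
      have "\<forall>m\<in>{1..M k}. Re ((g (l k)) ^ m) > 0"
      proof
        fix m assume m: "m \<in> {1..M k}"
        have "l k [^]\<^bsub>G\<^esub> m \<in> P k" unfolding P_def using lE m by blast
        then have "l k [^]\<^bsub>G\<^esub> m \<in> L" unfolding L_def by blast
        then have "cmod (g (l k [^]\<^bsub>G\<^esub> m) - 1) < 1" using gL \<delta>_def by fastforce
        then have "cmod ((g (l k)) ^ m - 1) < 1" using gpow[OF lc] by simp
        moreover have "Re ((g (l k)) ^ m - 1) \<ge> - cmod ((g (l k)) ^ m - 1)"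
          using abs_Re_le_cmod[of "(g (l k)) ^ m - 1"] by linarith
        ultimately show "Re ((g (l k)) ^ m) > 0" by simp
      qed
      then have "cmod (g (l k) - 1) < 2 / real (M k)"
        using circle_pow_lemma[OF gu[OF lc] M1] by blast
      then show ?thesis using Mb[of k] by linarith
    qed
    have arec: "a (Suc k) = l k \<otimes>\<^bsub>G\<^esub> a k" for k
      unfolding l_def using grp_id2[OF ac ac] by simp
    have ind: "cmod (g (a n) - 1) \<le> cmod (g (a 0) - 1) + \<epsilon>/4 - \<epsilon>/2^(n+2)" for n
    proof (induction n)
      case 0 then show ?case by simp
    next
      case (Suc n)
      have "g (a (Suc n)) = g (l n) * g (a n)" using arec gm lc ac by simp
      then have "cmod (g (a (Suc n)) - 1) \<le> cmod (g (l n) - 1) + cmod (g (a n) - 1)"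
        using unit_mult_dist[OF gu[OF ac]] by simp
      also have "\<dots> \<le> \<epsilon> / 2^(n+3) + (cmod (g (a 0) - 1) + \<epsilon>/4 - \<epsilon>/2^(n+2))"
        using lsmall[of n] Suc by linarith
      also have "\<dots> = cmod (g (a 0) - 1) + \<epsilon>/4 - \<epsilon>/2^(Suc n+2)"
        by (simp add: field_simps power_add)
      finally show ?case .
    qed
    have "a 0 \<in> L" unfolding L_def using aF by blast
    then have a0: "cmod (g (a 0) - 1) < \<epsilon>/4" using gL \<delta>_def by fastforce
    have "\<epsilon>/2^(N+2) > 0" using ep by simp
    then have aN: "cmod (g (a N) - 1) < \<epsilon>/2" using ind[of N] a0 by linarith
    define v where "v = inv\<^bsub>G\<^esub> (a N) \<otimes>\<^bsub>G\<^esub> x"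
    have vc: "v \<in> carrier G" unfolding v_def using ac xt by simp
    have "v \<in> Og" unfolding v_def using aV[of N] VB[of N] BN by blast
    then have "dist 1 (g v) < \<epsilon>/4" unfolding Og_def by simp
    then have gv: "cmod (g v - 1) < \<epsilon>/4" by (simp add: dist_norm norm_minus_commute)
    have "x = a N \<otimes>\<^bsub>G\<^esub> v" unfolding v_def using grp_id3[OF ac xt] by simp
    then have "g x = g (a N) * g v" using gm ac vc by simp
    then have "cmod (g x - 1) \<le> cmod (g (a N) - 1) + cmod (g v - 1)"
      using unit_mult_dist[OF gu[OF vc]] by simp
    then show "cmod (g x - 1) < \<epsilon>" using aN gv ep by linarith
  qed
  show ?thesis
    using cL LD dpos main by blast
qed


abbreviation chA where "chA \<equiv> characters S G"
abbreviation chD where "chD \<equiv> characters (subtopology S D) (G\<lparr>carrier := D\<rparr>)"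

lemma topD: "topspace (subtopology S D) = D" using D_sub ts by auto

lemma chD_iff: "\<psi> \<in> chD \<longleftrightarrow> continuous_map (subtopology S D) circle_top \<psi> \<and>
   (\<forall>x\<in>D. \<forall>y\<in>D. \<psi> (x \<otimes>\<^bsub>G\<^esub> y) = \<psi> x * \<psi> y) \<and> (\<forall>x. x \<notin> D \<longrightarrow> \<psi> x = 1)"
  unfolding characters_def using topD by simp

lemma chA_iff: "\<phi> \<in> chA \<longleftrightarrow> continuous_map S circle_top \<phi> \<and>
   (\<forall>x\<in>carrier G. \<forall>y\<in>carrier G. \<phi> (x \<otimes>\<^bsub>G\<^esub> y) = \<phi> x * \<phi> y) \<and> (\<forall>x. x \<notin> carrier G \<longrightarrow> \<phi> x = 1)"
  unfolding characters_def using ts by simp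

lemma chD_unit: "\<psi> \<in> chD \<Longrightarrow> a \<in> D \<Longrightarrow> cmod (\<psi> a) = 1"
  using char_unit[of "subtopology S D" \<psi> a] topD chD_iff by auto

lemma chA_unit: "\<phi> \<in> chA \<Longrightarrow> a \<in> carrier G \<Longrightarrow> cmod (\<phi> a) = 1"
  using char_unit[of S \<phi> a] ts chA_iff by auto

lemma chD_one: "\<psi> \<in> chD \<Longrightarrow> \<psi> \<one>\<^bsub>G\<^esub> = 1"
proof -
  assume p: "\<psi> \<in> chD"
  have m: "\<forall>x\<in>D. \<forall>y\<in>D. \<psi> (x \<otimes>\<^bsub>G\<^esub> y) = \<psi> x * \<psi> y" using p by (simp add: chD_iff)
  have "\<psi> (\<one>\<^bsub>G\<^esub> \<otimes>\<^bsub>G\<^esub> \<one>\<^bsub>G\<^esub>) = \<psi> \<one>\<^bsub>G\<^esub> * \<psi> \<one>\<^bsub>G\<^esub>" using m D_one by blast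
  then have "\<psi> \<one>\<^bsub>G\<^esub> = \<psi> \<one>\<^bsub>G\<^esub> * \<psi> \<one>\<^bsub>G\<^esub>" by simp
  moreover have "\<psi> \<one>\<^bsub>G\<^esub> \<noteq> 0" using chD_unit[OF p D_one] by auto
  ultimately show ?thesis by simp
qed

definition approx :: "('a \<Rightarrow> complex) \<Rightarrow> 'a \<Rightarrow> complex \<Rightarrow> bool" where
  "approx \<psi> x l \<longleftrightarrow> (\<forall>e>0. \<exists>V. openin S V \<and> x \<in> V \<and> (\<forall>a\<in>V. a \<in> D \<longrightarrow> cmod (\<psi> a - l) < e))"

definition extc :: "('a \<Rightarrow> complex) \<Rightarrow> 'a \<Rightarrow> complex" where
  "extc \<psi> x = (if x \<in> topspace S then (SOME l. approx \<psi> x l) else 1)"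

lemma approx_ex:
  assumes p: "\<psi> \<in> chD" and x: "x \<in> topspace S"
  shows "\<exists>l. approx \<psi> x l"
proof -
  have pc: "continuous_map (subtopology S D) circle_top \<psi>" using p chD_iff by blast
  have pm: "\<And>a b. a \<in> D \<Longrightarrow> b \<in> D \<Longrightarrow> \<psi> (a \<otimes>\<^bsub>G\<^esub> b) = \<psi> a * \<psi> b" using p chD_iff by blast
  define F where "F = inf (nhdsin S x) (principal D)"
  have "cauchy_filter (filtermap \<psi> F)"
    unfolding cauchy_filter_metric_filtermap
  proof (intro allI impI)
    fix e :: real assume e: "e > 0"
    have "openin (subtopology S D) {a \<in> topspace (subtopology S D). \<psi> a \<in> sphere 0 1 \<inter> ball 1 e}"
      by (rule openin_continuous_map_preimage[OF pc]) (intro openin_open_Int open_ball)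
    then obtain W where W: "openin S W" "{a \<in> topspace (subtopology S D). \<psi> a \<in> sphere 0 1 \<inter> ball 1 e} = W \<inter> D"
      unfolding openin_subtopology by blast
    have "\<one>\<^bsub>G\<^esub> \<in> {a \<in> topspace (subtopology S D). \<psi> a \<in> sphere 0 1 \<inter> ball 1 e}"
      using D_one chD_one[OF p] e topD by simp
    then have W1: "\<one>\<^bsub>G\<^esub> \<in> W" using W(2) by blast
    have Wp: "cmod (\<psi> c - 1) < e" if "c \<in> W" "c \<in> D" for c
    proof -
      have "c \<in> {a \<in> topspace (subtopology S D). \<psi> a \<in> sphere 0 1 \<inter> ball 1 e}" using W(2) that by blast
      then have "dist 1 (\<psi> c) < e" by simp
      then show ?thesis by (simp add: dist_norm norm_minus_commute)
    qed
    obtain V where V: "openin S V" "x \<in> V" "\<And>a b. a \<in> V \<Longrightarrow> b \<in> V \<Longrightarrow> a \<otimes>\<^bsub>G\<^esub> inv\<^bsub>G\<^esub> b \<in> W"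
      using nbhd_div[OF W(1) W1 x] by metis
    show "\<exists>P. eventually P F \<and> (\<forall>a b. P a \<and> P b \<longrightarrow> dist (\<psi> a) (\<psi> b) < e)"
    proof (intro exI conjI allI impI)
      show "eventually (\<lambda>a. a \<in> V \<and> a \<in> D) F"
        unfolding F_def eventually_inf_principal eventually_nhdsin using V by blast
      fix a b assume ab: "(a \<in> V \<and> a \<in> D) \<and> (b \<in> V \<and> b \<in> D)"
      define c where "c = a \<otimes>\<^bsub>G\<^esub> inv\<^bsub>G\<^esub> b"
      have cD: "c \<in> D" unfolding c_def using ab by (auto intro: D_mult D_inv)
      have cW: "c \<in> W" unfolding c_def using ab V(3) by blast
      have abc: "a \<in> carrier G" "b \<in> carrier G" using ab D_sub by auto
      have ac: "a = c \<otimes>\<^bsub>G\<^esub> b" unfolding c_def using grp_id2[OF abc] by simp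
      have "\<psi> a = \<psi> c * \<psi> b" using ac pm cD ab by simp
      then have "\<psi> a - \<psi> b = (\<psi> c - 1) * \<psi> b" by (simp add: algebra_simps)
      then have "cmod (\<psi> a - \<psi> b) = cmod (\<psi> c - 1)" using chD_unit[OF p] ab by (simp add: norm_mult)
      then show "dist (\<psi> a) (\<psi> b) < e" using Wp[OF cW cD] by (simp add: dist_norm)
    qed
  qed
  then have "convergent_filter (filtermap \<psi> F)" by (rule cauchy_filter_convergent)
  then obtain l where "filtermap \<psi> F \<le> nhds l" unfolding convergent_filter_iff by blast
  then have lim: "(\<psi> \<longlongrightarrow> l) F" unfolding filterlim_def .
  have "approx \<psi> x l" unfolding approx_def
  proof (intro allI impI)
    fix e :: real assume e: "e > 0"
    have "eventually (\<lambda>a. dist (\<psi> a) l < e) F" using tendstoD[OF lim e] .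
    then have "\<exists>V. openin S V \<and> x \<in> V \<and> (\<forall>a\<in>V. a \<in> D \<longrightarrow> dist (\<psi> a) l < e)"
      unfolding F_def eventually_inf_principal eventually_nhdsin using x by blast
    then show "\<exists>V. openin S V \<and> x \<in> V \<and> (\<forall>a\<in>V. a \<in> D \<longrightarrow> cmod (\<psi> a - l) < e)"
      by (simp add: dist_norm)
  qed
  then show ?thesis by blast
qed

lemma approx_unique:
  assumes "approx \<psi> x l1" "approx \<psi> x l2"
  shows "l1 = l2"
proof (rule small_eq)
  fix e :: real assume e: "e > 0"
  obtain V1 where V1: "openin S V1" "x \<in> V1" "\<forall>a\<in>V1. a \<in> D \<longrightarrow> cmod (\<psi> a - l1) < e/2"
    using assms(1) e unfolding approx_def by (meson half_gt_zero)
  obtain V2 where V2: "openin S V2" "x \<in> V2" "\<forall>a\<in>V2. a \<in> D \<longrightarrow> cmod (\<psi> a - l2) < e/2"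
    using assms(2) e unfolding approx_def by (meson half_gt_zero)
  obtain a where a: "a \<in> V1 \<inter> V2" "a \<in> D" using dense_meet[of "V1 \<inter> V2" x] V1 V2 by auto
  have "cmod (l1 - l2) \<le> cmod (\<psi> a - l1) + cmod (\<psi> a - l2)"
    by (rule tri3)
  then show "cmod (l1 - l2) < e" using V1(3) V2(3) a by fastforce
qed

lemma extc_approx: "\<psi> \<in> chD \<Longrightarrow> x \<in> topspace S \<Longrightarrow> approx \<psi> x (extc \<psi> x)"
  unfolding extc_def using approx_ex by (simp add: someI_ex)

lemma extc_eq: "\<psi> \<in> chD \<Longrightarrow> x \<in> topspace S \<Longrightarrow> approx \<psi> x l \<Longrightarrow> extc \<psi> x = l"
  using extc_approx approx_unique by blast

lemma extc_D: assumes p: "\<psi> \<in> chD" and x: "x \<in> D" shows "extc \<psi> x = \<psi> x"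
proof -
  have xt: "x \<in> topspace S" using x D_sub ts by auto
  show ?thesis
  proof (rule sym, rule small_eq)
    fix e :: real assume "e > 0"
    then obtain V where "openin S V" "x \<in> V" "\<forall>a\<in>V. a \<in> D \<longrightarrow> cmod (\<psi> a - extc \<psi> x) < e"
      using extc_approx[OF p xt] unfolding approx_def by blast
    then show "cmod (\<psi> x - extc \<psi> x) < e" using x by blast
  qed
qed

lemma extc_unit: assumes p: "\<psi> \<in> chD" and x: "x \<in> topspace S" shows "cmod (extc \<psi> x) = 1"
proof -
  have that: "\<bar>cmod (extc \<psi> x) - 1\<bar> < e" if e: "e > 0" for e
  proof -
    obtain V where V: "openin S V" "x \<in> V" "\<forall>a\<in>V. a \<in> D \<longrightarrow> cmod (\<psi> a - extc \<psi> x) < e"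
      using extc_approx[OF p x] e unfolding approx_def by blast
    obtain a where a: "a \<in> V" "a \<in> D" using dense_meet V by blast
    have "\<bar>cmod (\<psi> a) - cmod (extc \<psi> x)\<bar> \<le> cmod (\<psi> a - extc \<psi> x)" by (rule norm_triangle_ineq3)
    then show ?thesis using V(3) a chD_unit[OF p a(2)] by auto
  qed
  show ?thesis
  proof (rule ccontr)
    assume "cmod (extc \<psi> x) \<noteq> 1"
    then have "\<bar>cmod (extc \<psi> x) - 1\<bar> > 0" by simp
    from that[OF this] show False by simp
  qed
qed

lemma extc_cont: assumes p: "\<psi> \<in> chD" shows "continuous_map S circle_top (extc \<psi>)"
  unfolding continuous_map_in_subtopology
proof
  show "extc \<psi> \<in> topspace S \<rightarrow> sphere 0 1" using extc_unit[OF p] by auto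
  show "continuous_map S euclidean (extc \<psi>)"
    unfolding continuous_map_def
  proof (intro conjI allI impI)
    show "extc \<psi> \<in> topspace S \<rightarrow> topspace euclidean" by simp
    fix U :: "complex set" assume "openin euclidean U"
    then have oU: "open U" by simp
    show "openin S {x \<in> topspace S. extc \<psi> x \<in> U}"
    proof (subst openin_subopen, intro ballI)
      fix x assume x: "x \<in> {x \<in> topspace S. extc \<psi> x \<in> U}"
      then have xt: "x \<in> topspace S" and xU: "extc \<psi> x \<in> U" by auto
      obtain r where r: "r > 0" "ball (extc \<psi> x) r \<subseteq> U" using oU xU unfolding open_contains_ball by blast
      have r2: "r/2 > 0" using r by simp
      obtain V where V: "openin S V" "x \<in> V" "\<forall>a\<in>V. a \<in> D \<longrightarrow> cmod (\<psi> a - extc \<psi> x) < r/2"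
        using extc_approx[OF p xt, unfolded approx_def, rule_format, OF r2] by blast
      have "V \<subseteq> {x \<in> topspace S. extc \<psi> x \<in> U}"
      proof
        fix y assume y: "y \<in> V"
        have yt: "y \<in> topspace S" using y V(1) openin_subset by blast
        obtain Vy where Vy: "openin S Vy" "y \<in> Vy" "\<forall>a\<in>Vy. a \<in> D \<longrightarrow> cmod (\<psi> a - extc \<psi> y) < r/2"
          using extc_approx[OF p yt, unfolded approx_def, rule_format, OF r2] by blast
        have "openin S (V \<inter> Vy)" "y \<in> V \<inter> Vy" using V Vy y by auto
        then obtain a where a: "a \<in> V \<inter> Vy" "a \<in> D" using dense_meet by blast
        have "cmod (extc \<psi> y - extc \<psi> x) \<le> cmod (\<psi> a - extc \<psi> y) + cmod (\<psi> a - extc \<psi> x)"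
          by (rule tri3)
        moreover have "cmod (\<psi> a - extc \<psi> y) < r/2" using Vy(3) a by blast
        moreover have "cmod (\<psi> a - extc \<psi> x) < r/2" using V(3) a by blast
        ultimately have "cmod (extc \<psi> y - extc \<psi> x) < r" by linarith
        then have "extc \<psi> y \<in> ball (extc \<psi> x) r" by (simp add: dist_norm norm_minus_commute)
        then show "y \<in> {x \<in> topspace S. extc \<psi> x \<in> U}" using r yt by blast
      qed
      then show "\<exists>T. openin S T \<and> x \<in> T \<and> T \<subseteq> {x \<in> topspace S. extc \<psi> x \<in> U}"
        using V by blast
    qed
  qed
qed

lemma extc_mult:
  assumes p: "\<psi> \<in> chD" and x: "x \<in> carrier G" and y: "y \<in> carrier G"
  shows "extc \<psi> (x \<otimes>\<^bsub>G\<^esub> y) = extc \<psi> x * extc \<psi> y"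
proof (rule small_eq)
  fix e :: real assume e: "e > 0"
  have xt: "x \<in> topspace S" and yt: "y \<in> topspace S" and xyt: "x \<otimes>\<^bsub>G\<^esub> y \<in> topspace S"
    using x y ts by auto
  have e3: "e/3 > 0" using e by simp
  obtain Vx where Vx: "openin S Vx" "x \<in> Vx" "\<forall>a\<in>Vx. a \<in> D \<longrightarrow> cmod (\<psi> a - extc \<psi> x) < e/3"
    using extc_approx[OF p xt, unfolded approx_def, rule_format, OF e3] by blast
  obtain Vy where Vy: "openin S Vy" "y \<in> Vy" "\<forall>a\<in>Vy. a \<in> D \<longrightarrow> cmod (\<psi> a - extc \<psi> y) < e/3"
    using extc_approx[OF p yt, unfolded approx_def, rule_format, OF e3] by blast
  obtain W where W: "openin S W" "x \<otimes>\<^bsub>G\<^esub> y \<in> W" "\<forall>a\<in>W. a \<in> D \<longrightarrow> cmod (\<psi> a - extc \<psi> (x \<otimes>\<^bsub>G\<^esub> y)) < e/3"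
    using extc_approx[OF p xyt, unfolded approx_def, rule_format, OF e3] by blast
  obtain V1 V2 where V12: "openin S V1" "openin S V2" "x \<in> V1" "y \<in> V2"
    "\<And>a b. a \<in> V1 \<Longrightarrow> b \<in> V2 \<Longrightarrow> a \<otimes>\<^bsub>G\<^esub> b \<in> W"
    using nbhd_mult[OF W(1) W(2) xt yt] by metis
  have "openin S (Vx \<inter> V1)" "x \<in> Vx \<inter> V1" using Vx V12 by auto
  then obtain a where a: "a \<in> Vx \<inter> V1" "a \<in> D" using dense_meet by blast
  have "openin S (Vy \<inter> V2)" "y \<in> Vy \<inter> V2" using Vy V12 by auto
  then obtain b where b: "b \<in> Vy \<inter> V2" "b \<in> D" using dense_meet by blast
  have abD: "a \<otimes>\<^bsub>G\<^esub> b \<in> D" using a b D_mult by auto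
  have abW: "a \<otimes>\<^bsub>G\<^esub> b \<in> W" using a b V12(5) by auto
  have m: "\<forall>x\<in>D. \<forall>y\<in>D. \<psi> (x \<otimes>\<^bsub>G\<^esub> y) = \<psi> x * \<psi> y" using p by (simp add: chD_iff)
  have pab: "\<psi> (a \<otimes>\<^bsub>G\<^esub> b) = \<psi> a * \<psi> b" using m a(2) b(2) by blast
  have "cmod (\<psi> (a \<otimes>\<^bsub>G\<^esub> b) - extc \<psi> (x \<otimes>\<^bsub>G\<^esub> y)) < e/3" using W(3) abW abD by blast
  then have 1: "cmod (\<psi> a * \<psi> b - extc \<psi> (x \<otimes>\<^bsub>G\<^esub> y)) < e/3" using pab by simp
  have 2: "cmod (\<psi> a - extc \<psi> x) < e/3" using Vx(3) a by blast
  have 3: "cmod (\<psi> b - extc \<psi> y) < e/3" using Vy(3) b by blast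
  have ua: "cmod (\<psi> a) = 1" using chD_unit[OF p a(2)] .
  have uy: "cmod (extc \<psi> y) = 1" using extc_unit[OF p yt] .
  have "\<psi> a * \<psi> b - extc \<psi> x * extc \<psi> y = \<psi> a * (\<psi> b - extc \<psi> y) + (\<psi> a - extc \<psi> x) * extc \<psi> y"
    by (simp add: algebra_simps)
  moreover have "cmod (\<psi> a * (\<psi> b - extc \<psi> y) + (\<psi> a - extc \<psi> x) * extc \<psi> y)
     \<le> cmod (\<psi> a * (\<psi> b - extc \<psi> y)) + cmod ((\<psi> a - extc \<psi> x) * extc \<psi> y)"
    by (rule norm_triangle_ineq)
  moreover have "cmod (\<psi> a * (\<psi> b - extc \<psi> y)) + cmod ((\<psi> a - extc \<psi> x) * extc \<psi> y)
     = cmod (\<psi> b - extc \<psi> y) + cmod (\<psi> a - extc \<psi> x)"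
    using ua uy by (simp add: norm_mult)
  ultimately have "cmod (\<psi> a * \<psi> b - extc \<psi> x * extc \<psi> y) \<le> cmod (\<psi> b - extc \<psi> y) + cmod (\<psi> a - extc \<psi> x)"
    by simp
  then have 4: "cmod (\<psi> a * \<psi> b - extc \<psi> x * extc \<psi> y) < 2*e/3" using 2 3 by linarith
  have "cmod (extc \<psi> (x \<otimes>\<^bsub>G\<^esub> y) - extc \<psi> x * extc \<psi> y)
      \<le> cmod (\<psi> a * \<psi> b - extc \<psi> (x \<otimes>\<^bsub>G\<^esub> y)) + cmod (\<psi> a * \<psi> b - extc \<psi> x * extc \<psi> y)"
    by (rule tri3)
  then show "cmod (extc \<psi> (x \<otimes>\<^bsub>G\<^esub> y) - extc \<psi> x * extc \<psi> y) < e" using 1 4 by linarith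
qed

lemma extc_chA: assumes p: "\<psi> \<in> chD" shows "extc \<psi> \<in> chA"
  unfolding chA_iff using extc_cont[OF p] extc_mult[OF p] ts by (auto simp: extc_def)


lemma res_chD: assumes f: "\<phi> \<in> chA" shows "restrict_char D \<phi> \<in> chD"
proof -
  have fc: "continuous_map S circle_top \<phi>" and fm: "\<forall>x\<in>carrier G. \<forall>y\<in>carrier G. \<phi> (x \<otimes>\<^bsub>G\<^esub> y) = \<phi> x * \<phi> y"
    using f by (simp_all add: chA_iff)
  have c1: "continuous_map (subtopology S D) circle_top \<phi>"
    by (rule continuous_map_from_subtopology[OF fc])
  have c2: "continuous_map (subtopology S D) circle_top (restrict_char D \<phi>)"
    by (rule continuous_map_eq[OF c1]) (simp add: topD restrict_char_def)
  have m: "\<forall>x\<in>D. \<forall>y\<in>D. restrict_char D \<phi> (x \<otimes>\<^bsub>G\<^esub> y) = restrict_char D \<phi> x * restrict_char D \<phi> y"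
    using fm D_sub D_mult by (auto simp: restrict_char_def)
  have o: "\<forall>x. x \<notin> D \<longrightarrow> restrict_char D \<phi> x = 1" by (simp add: restrict_char_def)
  show ?thesis unfolding chD_iff using c2 m o by blast
qed

lemma extc_res: assumes f: "\<phi> \<in> chA" shows "extc (restrict_char D \<phi>) = \<phi>"
proof
  fix x
  have fc: "continuous_map S circle_top \<phi>" and fo: "\<forall>x. x \<notin> carrier G \<longrightarrow> \<phi> x = 1"
    using f by (simp_all add: chA_iff)
  show "extc (restrict_char D \<phi>) x = \<phi> x"
  proof (cases "x \<in> topspace S")
    case False
    then show ?thesis using fo ts by (simp add: extc_def)
  next
    case xt: True
    have "approx (restrict_char D \<phi>) x (\<phi> x)" unfolding approx_def
    proof (intro allI impI)
      fix e :: real assume e: "e > 0"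
      define V where "V = {y \<in> topspace S. \<phi> y \<in> sphere 0 1 \<inter> ball (\<phi> x) e}"
      have "openin S V" unfolding V_def
        by (rule openin_continuous_map_preimage[OF fc]) (intro openin_open_Int open_ball)
      moreover have "x \<in> V" unfolding V_def using xt e char_unit[OF fc xt] by simp
      moreover have "\<forall>a\<in>V. a \<in> D \<longrightarrow> cmod (restrict_char D \<phi> a - \<phi> x) < e"
        unfolding V_def by (auto simp: restrict_char_def dist_norm norm_minus_commute)
      ultimately show "\<exists>V. openin S V \<and> x \<in> V \<and> (\<forall>a\<in>V. a \<in> D \<longrightarrow> cmod (restrict_char D \<phi> a - \<phi> x) < e)"
        by blast
    qed
    then show ?thesis using extc_eq[OF res_chD[OF f] xt] by blast
  qed
qed

lemma res_extc: assumes p: "\<psi> \<in> chD" shows "restrict_char D (extc \<psi>) = \<psi>"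
proof
  fix x
  show "restrict_char D (extc \<psi>) x = \<psi> x"
  proof (cases "x \<in> D")
    case True then show ?thesis using extc_D[OF p True] by (simp add: restrict_char_def)
  next
    case False then show ?thesis using p by (simp add: restrict_char_def chD_iff)
  qed
qed

lemma top_dualA: "topspace (dual_top S G) = chA"
  unfolding dual_top_def by (rule topspace_co)

lemma top_dualD: "topspace (dual_top (subtopology S D) (G\<lparr>carrier := D\<rparr>)) = chD"
  unfolding dual_top_def by (rule topspace_co)

lemma res_cont: "continuous_map (dual_top S G) (dual_top (subtopology S D) (G\<lparr>carrier := D\<rparr>)) (restrict_char D)"
proof -
  define Sb where "Sb = {{f \<in> chD. f ` K \<subseteq> U} | K U. compactin (subtopology S D) K \<and> openin circle_top U}"
  have eq: "dual_top (subtopology S D) (G\<lparr>carrier := D\<rparr>) = topology_generated_by Sb"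
    unfolding Sb_def dual_top_def compact_open_def ..
  have un: "\<Union>Sb = chD" using topspace_co[of "subtopology S D" circle_top chD]
    unfolding Sb_def compact_open_def topology_generated_by_topspace .
  show ?thesis
    unfolding eq continuous_on_generated_topo_iff top_dualA
  proof (intro conjI allI impI)
    show "restrict_char D ` chA \<subseteq> \<Union>Sb" unfolding un using res_chD by blast
    fix Z assume "Z \<in> Sb"
    then obtain K U where Z: "Z = {f \<in> chD. f ` K \<subseteq> U}" and K: "compactin (subtopology S D) K"
      and U: "openin circle_top U" unfolding Sb_def by blast
    have KD: "K \<subseteq> D" and KS: "compactin S K" using K by (simp_all add: compactin_subtopology)
    have "restrict_char D -` Z \<inter> chA = {\<phi> \<in> chA. \<phi> ` K \<subseteq> U}"
    proof -
      have "restrict_char D \<phi> ` K = \<phi> ` K" for \<phi>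
        using KD by (auto simp: restrict_char_def image_def)
      then show ?thesis unfolding Z using res_chD by auto
    qed
    then show "openin (dual_top S G) (restrict_char D -` Z \<inter> chA)"
      unfolding dual_top_def using co_basic[OF KS U] by simp
  qed
qed

lemma ext_open:
  assumes fc: "first_countable S" and K: "compactin S K" and U: "openin circle_top U"
  shows "openin (dual_top (subtopology S D) (G\<lparr>carrier := D\<rparr>)) {\<psi> \<in> chD. extc \<psi> ` K \<subseteq> U}"
proof (subst openin_subopen, intro ballI)
  fix \<psi>0 assume p0: "\<psi>0 \<in> {\<psi> \<in> chD. extc \<psi> ` K \<subseteq> U}"
  then have p0D: "\<psi>0 \<in> chD" and p0K: "extc \<psi>0 ` K \<subseteq> U" by auto
  obtain Oc where Oc: "open Oc" "U = Oc \<inter> sphere 0 1"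
    using U unfolding openin_subtopology by auto
  have Kt: "K \<subseteq> topspace S" using K compactin_subset_topspace by blast
  have "compactin circle_top (extc \<psi>0 ` K)" by (rule image_compactin[OF K extc_cont[OF p0D]])
  then have cK: "compact (extc \<psi>0 ` K)" by (simp add: compactin_subtopology)
  have KO: "extc \<psi>0 ` K \<subseteq> Oc" using p0K Oc by auto
  obtain \<epsilon> where ep: "\<epsilon> > 0" "(\<Union>z\<in>extc \<psi>0 ` K. ball z \<epsilon>) \<subseteq> Oc"
    using compact_subset_open_imp_ball_epsilon_subset[OF cK Oc(1) KO] by blast
  obtain L \<delta> where L: "compactin S L" "L \<subseteq> D" "\<delta> > 0"
    and Lp: "\<forall>g. continuous_map S circle_top g \<and>
         (\<forall>x\<in>carrier G. \<forall>y\<in>carrier G. g (x \<otimes>\<^bsub>G\<^esub> y) = g x * g y) \<and>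
         (\<forall>l\<in>L. cmod (g l - 1) < \<delta>) \<longrightarrow> (\<forall>x\<in>K. cmod (g x - 1) < \<epsilon>)"
    using core[OF fc K ep(1)] by blast
  have LD': "compactin (subtopology S D) L" using L by (simp add: compactin_subtopology)
  have p0c: "continuous_map (subtopology S D) circle_top \<psi>0" using p0D chD_iff by blast
  obtain N where N: "openin (compact_open (subtopology S D) circle_top chD) N" "\<psi>0 \<in> N"
    "\<forall>f\<in>N. \<forall>l\<in>L. cmod (f l - \<psi>0 l) < \<delta>"
    using co_unif[OF p0D p0c LD' L(3)] by blast
  have "N \<subseteq> {\<psi> \<in> chD. extc \<psi> ` K \<subseteq> U}"
  proof
    fix \<psi> assume pN: "\<psi> \<in> N"
    have pD: "\<psi> \<in> chD" using openin_subset[OF N(1)] pN topspace_co by blast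
    define g where "g = (\<lambda>x. extc \<psi> x * cnj (extc \<psi>0 x))"
    have ce1: "continuous_map S euclidean (extc \<psi>)" using extc_cont[OF pD] continuous_map_in_subtopology by blast
    have ce2: "continuous_map S euclidean (extc \<psi>0)" using extc_cont[OF p0D] continuous_map_in_subtopology by blast
    have gc: "continuous_map S circle_top g"
      unfolding continuous_map_in_subtopology
    proof
      show "continuous_map S euclidean g" unfolding g_def by (rule cmap_mult_cnj[OF ce1 ce2])
      show "g \<in> topspace S \<rightarrow> sphere 0 1"
        using extc_unit[OF pD] extc_unit[OF p0D] by (auto simp: g_def norm_mult)
    qed
    have gm: "\<forall>x\<in>carrier G. \<forall>y\<in>carrier G. g (x \<otimes>\<^bsub>G\<^esub> y) = g x * g y"
      unfolding g_def using extc_mult[OF pD] extc_mult[OF p0D] by (simp add: mult_ac)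
    have gL: "\<forall>l\<in>L. cmod (g l - 1) < \<delta>"
    proof
      fix l assume l: "l \<in> L"
      then have lD: "l \<in> D" using L(2) by blast
      have "g l = \<psi> l * cnj (\<psi>0 l)" unfolding g_def using extc_D[OF pD lD] extc_D[OF p0D lD] by simp
      then have "cmod (g l - 1) = cmod (\<psi> l - \<psi>0 l)" using unit_cnj_dist[OF chD_unit[OF p0D lD]] by simp
      then show "cmod (g l - 1) < \<delta>" using N(3) pN l by auto
    qed
    have gK: "\<forall>x\<in>K. cmod (g x - 1) < \<epsilon>" using Lp gc gm gL by blast
    have "extc \<psi> x \<in> U" if x: "x \<in> K" for x
    proof -
      have xt: "x \<in> topspace S" using x Kt by blast
      have "cmod (g x - 1) = cmod (extc \<psi> x - extc \<psi>0 x)"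
        unfolding g_def by (rule unit_cnj_dist[OF extc_unit[OF p0D xt]])
      moreover have "cmod (g x - 1) < \<epsilon>" using gK x by blast
      ultimately have "cmod (extc \<psi> x - extc \<psi>0 x) < \<epsilon>" by simp
      then have "dist (extc \<psi>0 x) (extc \<psi> x) < \<epsilon>" by (simp add: dist_norm norm_minus_commute)
      then have "extc \<psi> x \<in> ball (extc \<psi>0 x) \<epsilon>" by simp
      then have "extc \<psi> x \<in> (\<Union>z\<in>extc \<psi>0 ` K. ball z \<epsilon>)" using x by blast
      then have "extc \<psi> x \<in> Oc" using ep(2) by (rule subsetD[rotated])
      moreover have "extc \<psi> x \<in> sphere 0 1" using extc_unit[OF pD xt] by simp
      ultimately show ?thesis unfolding Oc(2) by (rule IntI)
    qed
    then show "\<psi> \<in> {\<psi> \<in> chD. extc \<psi> ` K \<subseteq> U}" using pD by blast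
  qed
  moreover have "openin (dual_top (subtopology S D) (G\<lparr>carrier := D\<rparr>)) N"
    using N(1) unfolding dual_top_def .
  ultimately show "\<exists>T. openin (dual_top (subtopology S D) (G\<lparr>carrier := D\<rparr>)) T \<and> \<psi>0 \<in> T \<and> T \<subseteq> {\<psi> \<in> chD. extc \<psi> ` K \<subseteq> U}"
    using N(2) by blast
qed

lemma ext_cont:
  assumes fc: "first_countable S"
  shows "continuous_map (dual_top (subtopology S D) (G\<lparr>carrier := D\<rparr>)) (dual_top S G) extc"
proof -
  define Sb where "Sb = {{f \<in> chA. f ` K \<subseteq> U} | K U. compactin S K \<and> openin circle_top U}"
  have eq: "dual_top S G = topology_generated_by Sb"
    unfolding Sb_def dual_top_def compact_open_def ..
  have un: "\<Union>Sb = chA" using topspace_co[of S circle_top chA]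
    unfolding Sb_def compact_open_def topology_generated_by_topspace .
  show ?thesis
    unfolding eq continuous_on_generated_topo_iff top_dualD
  proof (intro conjI allI impI)
    show "extc ` chD \<subseteq> \<Union>Sb" unfolding un using extc_chA by blast
    fix Z assume "Z \<in> Sb"
    then obtain K U where Z: "Z = {f \<in> chA. f ` K \<subseteq> U}" and K: "compactin S K"
      and U: "openin circle_top U" unfolding Sb_def by blast
    have "extc -` Z \<inter> chD = {\<psi> \<in> chD. extc \<psi> ` K \<subseteq> U}"
      unfolding Z using extc_chA by auto
    then show "openin (dual_top (subtopology S D) (G\<lparr>carrier := D\<rparr>)) (extc -` Z \<inter> chD)"
      using ext_open[OF fc K U] by simp
  qed
qed

end

theorem mainTheorem12:
  fixes S :: "'a topology" and G :: "('a, 'b) monoid_scheme" and D :: "'a set"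
  assumes "topological_comm_group S G"
    and "metrizable_space S"
    and "subgroup D G"
    and "S closure_of D = topspace S"
  shows "homeomorphic_map (dual_top S G)
           (dual_top (subtopology S D) (G\<lparr>carrier := D\<rparr>)) (restrict_char D) \<and>
         (\<forall>\<phi>\<in>characters S G. \<forall>\<eta>\<in>characters S G.
           restrict_char D (\<lambda>x. \<phi> x * \<eta> x) = (\<lambda>x. restrict_char D \<phi> x * restrict_char D \<eta> x))"
proof
  interpret dctx S G D
    by (rule dctx.intro) (use assms in auto)
  have fc: "first_countable S" using assms(2) by (rule metrizable_imp_first_countable)
  have "homeomorphic_maps (dual_top S G) (dual_top (subtopology S D) (G\<lparr>carrier := D\<rparr>)) (restrict_char D) extc"
    unfolding homeomorphic_maps_def top_dualA top_dualD
    using res_cont ext_cont[OF fc] extc_res res_extc by blast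
  then show "homeomorphic_map (dual_top S G) (dual_top (subtopology S D) (G\<lparr>carrier := D\<rparr>)) (restrict_char D)"
    using homeomorphic_map_maps by blast
  show "\<forall>\<phi>\<in>characters S G. \<forall>\<eta>\<in>characters S G.
           restrict_char D (\<lambda>x. \<phi> x * \<eta> x) = (\<lambda>x. restrict_char D \<phi> x * restrict_char D \<eta> x)"
    by (auto simp: restrict_char_def fun_eq_iff)
qed


end
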